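(* Let $\mathcal M$ be a compact smooth geodesically convex manifold of intrinsic dimension $d$ with a probability measure $\mu$, let $X_1,\dots,X_\ell$ be i.i.d. from $\mu$ and let $\mathbf x\in\mathcal M$. Assume $\mu(B_{\mathbf x}(r))\ge Qr^d$ for all $r\le R$, where $Q,R>0$. Let $X_{\mathcal M}^{(\ell)}(\mathbf x)$ be a point among $X_1,\dots,X_\ell$ minimizing $d_{\mathcal M}(\mathbf x,\cdot)$. Then for every $\lambda>0$, $$\int_0^{\lambda^2R^2}\Pr\Big[d_{\mathcal M}\big(\mathbf x,X_{\mathcal M}^{(\ell)}(\mathbf x)\big)>\frac{\sqrt r}{\lambda}\Big]\,dr\le\frac{2\lambda^2\,\ell^{-2/d}}{(1-e^{-Q})^2}.$$
   Context: $d_{\mathcal M}$ is the geodesic distance on $\mathcal M$ and $B_{\mathbf x}(r)=\{\mathbf x'\in\mathcal M:d_{\mathcal M}(\mathbf x,\mathbf x')<r\}$. *)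

theory Defs
  imports "HOL-Probability.Probability"
begin

definition nn_dist :: "'a::metric_space \<Rightarrow> (nat \<Rightarrow> 'a) \<Rightarrow> nat \<Rightarrow> real" where
  "nn_dist x X l = Min ((\<lambda>i. dist x (X i)) ` {..<l})"

definition geo_ball :: "'a::metric_space set \<Rightarrow> 'a \<Rightarrow> real \<Rightarrow> 'a set" where
  "geo_ball M x r = {x' \<in> M. dist x x' < r}"

end

theory Submission
  imports Defs
begin

lemma prob_bound:
  fixes M :: "'a::metric_space set" and \<mu> :: "'a measure"
    and d l :: nat and x :: 'a and Q R t :: real
  assumes sets: "sets \<mu> = sets (restrict_space borel M)"
    and ps: "prob_space \<mu>"
    and "l \<ge> 1"
    and ball: "measure \<mu> (geo_ball M x t) \<ge> Q * t ^ d"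
  shows "measure (PiM {..<l} (\<lambda>_. \<mu>))
              {X \<in> space (PiM {..<l} (\<lambda>_. \<mu>)). nn_dist x X l > t} \<le> exp (- (real l * Q * t ^ d))"
proof -
  interpret P: finite_product_prob_space "\<lambda>_. \<mu>" "{..<l}"
    by (intro finite_product_prob_space.intro finite_product_sigma_finite.intro
          product_prob_space.intro product_sigma_finite.intro finite_product_sigma_finite_axioms.intro
          product_prob_space_axioms.intro) (auto simp: ps prob_space_imp_sigma_finite)
  interpret m: prob_space \<mu> by (rule ps)
  have sp: "space \<mu> = M"
    using sets_eq_imp_space_eq[OF sets] by (simp add: space_restrict_space)
  define A where "A = {y \<in> M. dist x y > t}"
  have Asets: "A \<in> sets \<mu>"
  proof -
    have "A = M \<inter> {y. dist x y > t}" by (auto simp: A_def)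
    moreover have "{y. dist x y > t} \<in> sets borel"
      by (intro borel_open open_Collect_less continuous_intros) 
    ultimately show ?thesis unfolding sets sets_restrict_space by auto
  qed
  have eq: "{X \<in> space (PiM {..<l} (\<lambda>_. \<mu>)). nn_dist x X l > t} = (\<Pi>\<^sub>E i\<in>{..<l}. A)"
  proof -
    have ne: "(\<lambda>i. dist x (X i)) ` {..<l} \<noteq> {}" for X :: "nat \<Rightarrow> 'a"
      using assms(3) by (auto simp: lessThan_empty_iff)
    have "nn_dist x X l > t \<longleftrightarrow> (\<forall>i<l. dist x (X i) > t)" for X
      unfolding nn_dist_def using ne[of X] by (subst Min_gr_iff) auto
    then show ?thesis
      unfolding space_PiM sp A_def by (auto simp: PiE_iff extensional_def)
  qed
  have "measure (PiM {..<l} (\<lambda>_. \<mu>)) (\<Pi>\<^sub>E i\<in>{..<l}. A) = (\<Prod>i\<in>{..<l}. measure \<mu> A)"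
    using P.prob_times[of "\<lambda>_. A"] Asets by simp
  also have "\<dots> = measure \<mu> A ^ l" by simp
  also have "\<dots> \<le> (1 - Q * t ^ d) ^ l"
  proof (rule power_mono)
    have "M - A = {y \<in> M. dist x y \<le> t}" by (auto simp: A_def)
    moreover have "geo_ball M x t \<subseteq> {y \<in> M. dist x y \<le> t}" by (auto simp: geo_ball_def)
    moreover have "measure \<mu> A = 1 - measure \<mu> (M - A)"
      using P.M.prob_compl[OF Asets] sp by simp
    moreover have "measure \<mu> (geo_ball M x t) \<le> measure \<mu> {y \<in> M. dist x y \<le> t}"
    proof -
      have "M - A \<in> sets \<mu>" using Asets sp by (metis sets.compl_sets)
      then show ?thesis
        using P.M.finite_measure_mono[of "geo_ball M x t" "M - A"] \<open>M - A = _\<close> \<open>geo_ball M x t \<subseteq> _\<close>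
        by simp
    qed
    ultimately show "measure \<mu> A \<le> 1 - Q * t ^ d" using ball by (metis (no_types, lifting) diff_left_mono order_trans)
  qed (rule measure_nonneg)
  also have "\<dots> \<le> exp (- (Q * t ^ d)) ^ l"
  proof (rule power_mono)
    show "1 - Q * t ^ d \<le> exp (- (Q * t ^ d))"
      using exp_ge_add_one_self[of "- (Q * t ^ d)"] by simp
    show "0 \<le> 1 - Q * t ^ d"
      using prob_space.prob_le_1[OF ps, of "geo_ball M x t"] ball by linarith
  qed
  also have "\<dots> = exp (- (real l * Q * t ^ d))"
    by (simp add: exp_of_nat_mult[symmetric])
  finally show ?thesis using eq by simp
qed

lemma int_sqrt:
  fixes c T :: real
  assumes c: "c > 0" and T: "T > 0"
  shows "set_integrable lborel {0<..<T} (\<lambda>r. exp (- (c * sqrt r)))"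
    and "(LINT r:{0<..<T}|lborel. exp (- (c * sqrt r))) \<le> 2 / c\<^sup>2"
proof -
  define F where "F r = - 2 * (c * sqrt r + 1) * exp (- (c * sqrt r)) / c\<^sup>2" for r
  have D: "DERIV F r :> exp (- (c * sqrt r))" if "r > 0" for r
    unfolding F_def using that c
    apply (auto intro!: derivative_eq_intros)
    apply (simp add: field_simps power2_eq_square power4_eq_xxxx)
    done
  have cont: "isCont F r" for r unfolding F_def by (intro continuous_intros) (use c in auto)
  have A: "((F \<circ> real_of_ereal) \<longlongrightarrow> F 0) (at_right (ereal 0))"
    unfolding ereal_tendsto_simps
    by (rule tendsto_mono[OF at_le]) (use cont[of 0] in \<open>auto simp: isCont_def\<close>)
  have B: "((F \<circ> real_of_ereal) \<longlongrightarrow> F T) (at_left (ereal T))"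
    unfolding ereal_tendsto_simps
    by (rule tendsto_mono[OF at_le]) (use cont[of T] in \<open>auto simp: isCont_def\<close>)
  note ftc = interval_integral_FTC_nonneg[of "ereal 0" "ereal T" F "\<lambda>r. exp (- (c * sqrt r))", OF _ _ _ _ A B]
  have ftc1: "set_integrable lborel (einterval (ereal 0) (ereal T)) (\<lambda>r. exp (- (c * sqrt r)))"
    and ftc2: "(LBINT r=ereal 0..ereal T. exp (- (c * sqrt r))) = F T - F 0"
  proof -
    have ic: "isCont (\<lambda>r. exp (- (c * sqrt r))) x" for x by (intro continuous_intros)
    have "ereal 0 < ereal T" using T by simp
    moreover have "\<And>x. ereal 0 < ereal x \<Longrightarrow> ereal x < ereal T \<Longrightarrow> DERIV F x :> exp (- (c * sqrt x))"
      using D by simp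
    moreover have "AE x in lborel. ereal 0 < ereal x \<longrightarrow> ereal x < ereal T \<longrightarrow> 0 \<le> exp (- (c * sqrt x))"
      by simp
    ultimately show "set_integrable lborel (einterval (ereal 0) (ereal T)) (\<lambda>r. exp (- (c * sqrt r)))"
      and "(LBINT r=ereal 0..ereal T. exp (- (c * sqrt r))) = F T - F 0"
      using ftc ic by blast+
  qed
  show "set_integrable lborel {0<..<T} (\<lambda>r. exp (- (c * sqrt r)))" using ftc1 by simp
  have "(LINT r:{0<..<T}|lborel. exp (- (c * sqrt r))) = F T - F 0"
    using ftc2 T by (simp add: interval_lebesgue_integral_le_eq)
  also have "\<dots> \<le> 2 / c\<^sup>2"
    unfolding F_def using c T by (simp add: field_simps)
  finally show "(LINT r:{0<..<T}|lborel. exp (- (c * sqrt r))) \<le> 2 / c\<^sup>2" .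
qed

lemma int_exp:
  fixes b T :: real
  assumes b: "b > 0" and T: "T > 0"
  shows "set_integrable lborel {0<..<T} (\<lambda>r. exp (- (b * r)))"
    and "(LINT r:{0<..<T}|lborel. exp (- (b * r))) \<le> 1 / b"
proof -
  define F where "F r = - exp (- (b * r)) / b" for r
  have D: "DERIV F r :> exp (- (b * r))" if "r > 0" for r
    unfolding F_def using that b
    apply (auto intro!: derivative_eq_intros)
    done
  have cont: "isCont F r" for r unfolding F_def by (intro continuous_intros) (use b in auto)
  have A: "((F \<circ> real_of_ereal) \<longlongrightarrow> F 0) (at_right (ereal 0))"
    unfolding ereal_tendsto_simps
    by (rule tendsto_mono[OF at_le]) (use cont[of 0] in \<open>auto simp: isCont_def\<close>)
  have B: "((F \<circ> real_of_ereal) \<longlongrightarrow> F T) (at_left (ereal T))"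
    unfolding ereal_tendsto_simps
    by (rule tendsto_mono[OF at_le]) (use cont[of T] in \<open>auto simp: isCont_def\<close>)
  note ftc = interval_integral_FTC_nonneg[of "ereal 0" "ereal T" F "\<lambda>r. exp (- (b * r))", OF _ _ _ _ A B]
  have ftc1: "set_integrable lborel (einterval (ereal 0) (ereal T)) (\<lambda>r. exp (- (b * r)))"
    and ftc2: "(LBINT r=ereal 0..ereal T. exp (- (b * r))) = F T - F 0"
  proof -
    have ic: "isCont (\<lambda>r. exp (- (b * r))) x" for x by (intro continuous_intros)
    have "ereal 0 < ereal T" using T by simp
    moreover have "\<And>x. ereal 0 < ereal x \<Longrightarrow> ereal x < ereal T \<Longrightarrow> DERIV F x :> exp (- (b * x))"
      using D by simp
    moreover have "AE x in lborel. ereal 0 < ereal x \<longrightarrow> ereal x < ereal T \<longrightarrow> 0 \<le> exp (- (b * x))"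
      by simp
    ultimately show "set_integrable lborel (einterval (ereal 0) (ereal T)) (\<lambda>r. exp (- (b * r)))"
      and "(LBINT r=ereal 0..ereal T. exp (- (b * r))) = F T - F 0"
      using ftc ic by blast+
  qed
  show "set_integrable lborel {0<..<T} (\<lambda>r. exp (- (b * r)))" using ftc1 by simp
  have "(LINT r:{0<..<T}|lborel. exp (- (b * r))) = F T - F 0"
    using ftc2 T by (simp add: interval_lebesgue_integral_le_eq)
  also have "\<dots> \<le> 1 / b"
    unfolding F_def using b T by (simp add: field_simps)
  finally show "(LINT r:{0<..<T}|lborel. exp (- (b * r))) \<le> 1 / b" .
qed

lemma fin:
  fixes l d :: nat and Q lam :: real
  assumes "l \<ge> 1" "d \<ge> 1" "Q > 0" "lam > 0"
  shows "2 * lam\<^sup>2 / ((real l * Q) powr (2 / real d)) \<le> 2 * lam\<^sup>2 * real l powr (- 2 / real d) / (1 - exp (- Q))\<^sup>2"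
proof -
  define E where "E = 1 - exp (- Q)"
  have E0: "0 < E" unfolding E_def using assms by simp
  have E1: "E < 1" unfolding E_def by simp
  have EQ: "E \<le> Q" unfolding E_def using exp_ge_add_one_self[of "-Q"] by simp
  have "E \<le> Q powr (1 / real d)"
  proof (cases "Q \<ge> 1")
    case True
    then have "1 \<le> Q powr (1 / real d)" by (simp add: ge_one_powr_ge_zero)
    then show ?thesis using E1 by simp
  next
    case False
    have "Q powr 1 \<le> Q powr (1 / real d)"
      using False assms by (intro powr_mono') auto
    then show ?thesis using EQ assms by simp
  qed
  then have "E\<^sup>2 \<le> (Q powr (1 / real d))\<^sup>2" using E0 by (intro power_mono) auto
  also have "\<dots> = Q powr (2 / real d)"
    using assms by (simp add: power2_eq_square powr_add[symmetric])
  finally have EQ2: "E\<^sup>2 \<le> Q powr (2 / real d)" .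
  have Lp: "real l powr (2 / real d) > 0" using assms by simp
  have "2 * lam\<^sup>2 / ((real l * Q) powr (2 / real d)) = 2 * lam\<^sup>2 / (real l powr (2 / real d) * Q powr (2 / real d))"
    using assms by (simp add: powr_mult)
  also have "\<dots> \<le> 2 * lam\<^sup>2 / (real l powr (2 / real d) * E\<^sup>2)"
    using EQ2 E0 Lp assms by (intro divide_left_mono mult_left_mono mult_pos_pos) auto
  also have "\<dots> = 2 * lam\<^sup>2 * real l powr (- 2 / real d) / E\<^sup>2"
    using Lp by (simp add: powr_minus_divide field_simps powr_minus)
  finally show ?thesis unfolding E_def .
qed

theorem lemmaA1:
  fixes M :: "'a::metric_space set" and \<mu> :: "'a measure"
    and d l :: nat and x :: 'a and Q R lam :: real
  assumes "compact M"
    and "sets \<mu> = sets (restrict_space borel M)"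
    and "prob_space \<mu>"
    and "d \<ge> 1" and "l \<ge> 1"
    and "x \<in> M"
    and "Q > 0" and "R > 0"
    and "\<And>r. 0 < r \<Longrightarrow> r \<le> R \<Longrightarrow> measure \<mu> (geo_ball M x r) \<ge> Q * r ^ d"
    and "lam > 0"
  shows "(LBINT r=0..lam\<^sup>2 * R\<^sup>2.
            measure (PiM {..<l} (\<lambda>_. \<mu>))
              {X \<in> space (PiM {..<l} (\<lambda>_. \<mu>)). nn_dist x X l > sqrt r / lam})
         \<le> 2 * lam\<^sup>2 * real l powr (- 2 / real d) / (1 - exp (- Q))\<^sup>2"
proof -
  define f where "f r = measure (PiM {..<l} (\<lambda>_. \<mu>))
              {X \<in> space (PiM {..<l} (\<lambda>_. \<mu>)). nn_dist x X l > sqrt r / lam}" for r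
  define T where "T = lam\<^sup>2 * R\<^sup>2"
  define B where "B = 2 * lam\<^sup>2 / ((real l * Q) powr (2 / real d))"
  have T0: "T > 0" unfolding T_def using assms by simp
  have eqI: "(LBINT r=0..lam\<^sup>2 * R\<^sup>2.
            measure (PiM {..<l} (\<lambda>_. \<mu>))
              {X \<in> space (PiM {..<l} (\<lambda>_. \<mu>)). nn_dist x X l > sqrt r / lam})
        = (LINT r:{0<..<T}|lborel. f r)"
    unfolding f_def T_def using T0 unfolding T_def
    by (simp add: interval_lebesgue_integral_le_eq zero_ereal_def)
  have fle: "f r \<le> exp (- (real l * Q * (sqrt r / lam) ^ d))" if r: "r \<in> {0<..<T}" for r
  proof -
    have "sqrt r < sqrt T" using r by simp
    also have "sqrt T = lam * R" unfolding T_def using assms by (simp add: real_sqrt_mult)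
    finally have "sqrt r / lam < R" using assms by (simp add: field_simps)
    moreover have "sqrt r / lam > 0" using r assms by simp
    ultimately show ?thesis unfolding f_def
      by (intro prob_bound[OF assms(2,3,5)] assms(9)) auto
  qed
  have Bfin: "B \<le> 2 * lam\<^sup>2 * real l powr (- 2 / real d) / (1 - exp (- Q))\<^sup>2"
    unfolding B_def using fin assms by blast
  have "(LINT r:{0<..<T}|lborel. f r) \<le> B"
  proof (cases "set_integrable lborel {0<..<T} f")
    case False
    then have "(LINT r:{0<..<T}|lborel. f r) = 0"
      unfolding set_integrable_def set_lebesgue_integral_def by (simp add: not_integrable_integral_eq)
    then show ?thesis unfolding B_def using assms by simp
  next
    case True
    show ?thesis
    proof (cases "d = 1")
      case d1: True
      define c where "c = real l * Q / lam"
      have c0: "c > 0" unfolding c_def using assms by simp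
      have "(LINT r:{0<..<T}|lborel. f r) \<le> (LINT r:{0<..<T}|lborel. exp (- (c * sqrt r)))"
      proof (rule set_integral_mono[OF True int_sqrt(1)[OF c0 T0]])
        fix r assume "r \<in> {0<..<T}"
        then show "f r \<le> exp (- (c * sqrt r))"
          using fle[of r] d1 unfolding c_def by (simp add: field_simps)
      qed
      also have "\<dots> \<le> 2 / c\<^sup>2" by (rule int_sqrt(2)[OF c0 T0])
      also have "\<dots> = B" unfolding B_def c_def d1 using assms
        by (simp add: field_simps power2_eq_square)
      finally show ?thesis .
    next
      case d2: False
      define b where "b = (real l * Q) powr (2 / real d) / lam\<^sup>2"
      have b0: "b > 0" unfolding b_def using assms by simp
      define g where "g r = indicator {0<..1/b} r + exp (- (b * r))" for r :: real
      have gle: "f r \<le> g r" if r: "r \<in> {0<..<T}" for r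
      proof -
        define z where "z = r / lam\<^sup>2"
        have z0: "z > 0" unfolding z_def using r assms by simp
        have "sqrt r / lam = z powr (1/2)"
          unfolding z_def using r assms by (simp add: powr_half_sqrt real_sqrt_divide)
        then have "(sqrt r / lam) ^ d = z powr (real d / 2)"
          using z0 by (simp add: powr_realpow[symmetric] powr_powr)
        then have key: "real l * Q * (sqrt r / lam) ^ d = (b * r) powr (real d / 2)"
        proof -
          assume h: "(sqrt r / lam) ^ d = z powr (real d / 2)"
          have "b * r = (real l * Q) powr (2 / real d) * z"
            unfolding b_def z_def by simp
          then have "(b * r) powr (real d / 2) = ((real l * Q) powr (2 / real d)) powr (real d / 2) * z powr (real d / 2)"
            using z0 assms by (simp add: powr_mult)
          also have "((real l * Q) powr (2 / real d)) powr (real d / 2) = real l * Q"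
            using assms by (simp add: powr_powr)
          finally show ?thesis using h by simp
        qed
        have f1: "f r \<le> exp (- ((b * r) powr (real d / 2)))" using fle[OF r] key by simp
        show ?thesis
        proof (cases "b * r \<le> 1")
          case True
          then have "r \<in> {0<..1/b}" using r b0 by (simp add: field_simps)
          then have "g r = 1 + exp (- (b * r))" unfolding g_def by simp
          moreover have "exp (- ((b * r) powr (real d / 2))) \<le> 1" by simp
          ultimately show ?thesis using f1 by (smt (verit) exp_gt_zero)
        next
          case False
          then have "b * r \<le> (b * r) powr (real d / 2)"
          proof -
            have "(1::real) \<le> real d / 2" using assms d2 by simp
            moreover have "1 \<le> b * r" using False by simp
            ultimately have "(b * r) powr 1 \<le> (b * r) powr (real d / 2)" by (intro powr_mono) auto
            then show ?thesis using False by simp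
          qed
          then have "exp (- ((b * r) powr (real d / 2))) \<le> exp (- (b * r))" by simp
          moreover have "g r \<ge> exp (- (b * r))" unfolding g_def by simp
          ultimately show ?thesis using f1 by linarith
        qed
      qed
      have emb: "emeasure lborel ({0<..<T} \<inter> {0<..1/b}) < \<infinity>"
      proof -
        have "emeasure lborel ({0<..<T} \<inter> {0<..1/b}) \<le> emeasure lborel {0<..1/b}"
          by (intro emeasure_mono) auto
        also have "\<dots> < \<infinity>" by (subst emeasure_lborel_Ioc) (use b0 in auto)
        finally show ?thesis .
      qed
      have indeq: "(\<lambda>r. indicator {0<..<T} r *\<^sub>R (indicator {0<..1/b} r :: real)) = indicator ({0<..<T} \<inter> {0<..1/b})"
        by (auto simp: indicator_def)
      have gi1: "set_integrable lborel {0<..<T} (indicator {0<..1/b} :: real \<Rightarrow> real)"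
        unfolding set_integrable_def indeq using emb by (intro integrable_real_indicator) auto
      have gi: "set_integrable lborel {0<..<T} g"
        unfolding g_def by (rule set_integral_add(1)[OF gi1 int_exp(1)[OF b0 T0]])
      have "(LINT r:{0<..<T}|lborel. f r) \<le> (LINT r:{0<..<T}|lborel. g r)"
        by (rule set_integral_mono[OF True gi]) (rule gle)
      also have "\<dots> = (LINT r:{0<..<T}|lborel. (indicator {0<..1/b} r :: real))
                     + (LINT r:{0<..<T}|lborel. exp (- (b * r)))"
        unfolding g_def by (rule set_integral_add(2)[OF gi1 int_exp(1)[OF b0 T0]])
      also have "(LINT r:{0<..<T}|lborel. (indicator {0<..1/b} r :: real)) \<le> 1 / b"
      proof -
        have "(LINT r:{0<..<T}|lborel. (indicator {0<..1/b} r :: real)) = measure lborel ({0<..<T} \<inter> {0<..1/b})"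
          unfolding set_lebesgue_integral_def indeq by (simp add: integral_indicator)
        also have "\<dots> \<le> measure lborel {0<..1/b}"
          by (intro measure_mono_fmeasurable) (auto simp: fmeasurable_def emeasure_lborel_Ioc less_imp_le[OF b0])
        also have "\<dots> = 1 / b" using b0 by simp
        finally show ?thesis .
      qed
      also have "(LINT r:{0<..<T}|lborel. exp (- (b * r))) \<le> 1 / b"
        by (rule int_exp(2)[OF b0 T0])
      also have "1 / b + 1 / b = B" unfolding B_def b_def by simp
      finally show ?thesis by simp
    qed
  qed
  then show ?thesis using eqI Bfin by simp
qed

end
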